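(* Under Assumption (A) of the context, for every $t$ and every integrable function $h$, $$\mathbb{E}_1[h(Y_t)\mid\mathcal{F}_{t-1}]=\mathbb{E}_1[h(Y_t)\mid\mathbf{P}_t]=\varepsilon_n\,\mathbb{E}_{1,\mathbf{P}_t}h(Y)+(1-\varepsilon_n)\,\mathbb{E}_0h(Y).$$
   Context: $\mathcal{W}$ is a finite vocabulary. For a probability vector $\mathbf{P}$ on $\mathcal{W}$, $\mu_{1,\mathbf{P}}$ is the distribution on $[0,1]$ with CDF $F_{1,\mathbf{P}}(r)=\sum_wP_wr^{1/P_w}$, and $\mathbb{E}_{1,\mathbf{P}}$ is expectation for $Y\sim\mu_{1,\mathbf{P}}$; $\mathbb{E}_0$ is expectation for $Y\sim U(0,1)$. Watermark model: for $t=1,\dots,n$ a random next-token distribution $\mathbf{P}_t$ is produced, $\xi_t=(U_{t,w})_w$ has i.i.d. $U(0,1)$ entries, the decoder is $\mathcal{S}(\mathbf{P},\xi)=\arg\max_w\frac{\log U_w}{P_w}$, the observed token is $w_t$, and $Y_t=U_{t,w_t}$; $\mathbb{E}_1$ denotes expectation under this model. Let $\mathcal{F}_{t-1}=\sigma(\{w_j,\xi_j,\mathbf{P}_{j+1}\}_{j=1}^{t-1})$. Assumption (A): (a) $\xi_1,\dots,\xi_n$ are i.i.d. and $\xi_t$ is independent of $\mathcal{F}_{t-1}$; (b) with probability $\varepsilon_n$, $w_t=\mathcal{S}(\mathbf{P}_t,\xi_t)$; otherwise $w_t$ is drawn from $\mathbf{P}_t$ and, conditionally on $\mathcal{F}_{t-1}$,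 is independent of $\xi_t$. *)

theory Defs
  imports "HOL-Probability.Probability"
begin

abbreviation vecM :: "('w \<Rightarrow> real) measure" where
  "vecM \<equiv> PiM UNIV (\<lambda>_. borel)"

definition unif01 :: "real measure" where
  "unif01 = uniform_measure lborel {0..1}"

definition cdf1 :: "('w::finite \<Rightarrow> real) \<Rightarrow> real \<Rightarrow> real" where
  "cdf1 P r = (if r \<le> 0 then 0 else if 1 \<le> r then 1
               else (\<Sum>w\<in>UNIV. P w * r powr (1 / P w)))"

definition mu1 :: "('w::finite \<Rightarrow> real) \<Rightarrow> real measure" where
  "mu1 P = interval_measure (cdf1 P)"

text \<open>The Gumbel-max decoder S(P, xi) = argmax_w (log U_w)/P_w, over tokens with P_w > 0
  (tokens with P_w = 0 have score -infinity). Ties occur with probability zero.\<close>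
definition decoder :: "('w \<Rightarrow> real) \<Rightarrow> ('w \<Rightarrow> real) \<Rightarrow> 'w" where
  "decoder P u = (SOME v. 0 < P v \<and> (\<forall>v'. 0 < P v' \<longrightarrow> ln (u v') / P v' \<le> ln (u v) / P v))"

definition gen :: "'a measure \<Rightarrow> ('a \<Rightarrow> 'b) \<Rightarrow> 'b measure \<Rightarrow> 'a set set" where
  "gen M X N = {X -` A \<inter> space M | A. A \<in> sets N}"

text \<open>F_{t-1} = sigma({w_j, xi_j, P_{j+1}}_{j=1}^{t-1}), together with P_t
  (already contained for t \<ge> 2; added so that F_0 contains P_1).\<close>
definition filt :: "'a measure \<Rightarrow> (nat \<Rightarrow> 'a \<Rightarrow> 'w \<Rightarrow> real) \<Rightarrow> (nat \<Rightarrow> 'a \<Rightarrow> 'w \<Rightarrow> real)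
                    \<Rightarrow> (nat \<Rightarrow> 'a \<Rightarrow> 'w) \<Rightarrow> nat \<Rightarrow> 'a measure" where
  "filt M P U W t = sigma (space M)
     (gen M (P t) vecM \<union>
      (\<Union>j\<in>{1..<t}. gen M (W j) (count_space UNIV) \<union> gen M (U j) vecM \<union> gen M (P (Suc j)) vecM))"

definition filt_xi :: "'a measure \<Rightarrow> (nat \<Rightarrow> 'a \<Rightarrow> 'w \<Rightarrow> real) \<Rightarrow> (nat \<Rightarrow> 'a \<Rightarrow> 'w \<Rightarrow> real)
                    \<Rightarrow> (nat \<Rightarrow> 'a \<Rightarrow> 'w) \<Rightarrow> nat \<Rightarrow> 'a measure" where
  "filt_xi M P U W t = sigma (space M) (sets (filt M P U W t) \<union> gen M (U t) vecM)"

definition sigP :: "'a measure \<Rightarrow> (nat \<Rightarrow> 'a \<Rightarrow> 'w \<Rightarrow> real) \<Rightarrow> nat \<Rightarrow> 'a measure" where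
  "sigP M P t = sigma (space M) (gen M (P t) vecM)"

end

theory Submission
  imports Defs
begin

lemma decoder_alt: "decoder p u = (\<lambda>T. SOME v. v \<in> T) {v. 0 < p v \<and> (\<forall>v'. 0 < p v' \<longrightarrow> ln (u v') / p v' \<le> ln (u v) / p v)}"
  unfolding decoder_def by simp

lemma measurable_decoder:
  fixes p u :: "'b \<Rightarrow> ('w::finite) \<Rightarrow> real"
  assumes [measurable]: "p \<in> measurable N vecM" "u \<in> measurable N vecM"
  shows "(\<lambda>x. decoder (p x) (u x)) \<in> measurable N (count_space UNIV)"
proof -
  have [measurable]: "(\<lambda>x. p x v) \<in> borel_measurable N" "(\<lambda>x. u x v) \<in> borel_measurable N" for v
    by measurable
  define Q where "Q x = {v. 0 < p x v \<and> (\<forall>v'. 0 < p x v' \<longrightarrow> ln (u x v') / p x v' \<le> ln (u x v) / p x v)}" for x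
  have "Q \<in> measurable N (count_space UNIV)"
    unfolding measurable_count_space_eq2_countable
  proof (intro conjI ballI)
    fix T :: "'w set"
    have "Q -` {T} \<inter> space N = {x \<in> space N. \<forall>v. (0 < p x v \<and> (\<forall>v'. 0 < p x v' \<longrightarrow> ln (u x v') / p x v' \<le> ln (u x v) / p x v)) = (v \<in> T)}"
      unfolding Q_def by auto
    also have "\<dots> \<in> sets N" by measurable
    finally show "Q -` {T} \<inter> space N \<in> sets N" .
  qed auto
  then have "(\<lambda>x. (\<lambda>T. SOME v. v \<in> T) (Q x)) \<in> measurable N (count_space UNIV)"
    by (rule measurable_compose) auto
  then show ?thesis unfolding decoder_alt Q_def .
qed

lemma measurable_decoder_eval:
  fixes p u :: "'b \<Rightarrow> ('w::finite) \<Rightarrow> real"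
  assumes [measurable]: "p \<in> measurable N vecM" "u \<in> measurable N vecM"
  shows "(\<lambda>x. u x (decoder (p x) (u x))) \<in> borel_measurable N"
  by (rule measurable_compose_countable[where f="\<lambda>i x. u x i", OF _ measurable_decoder[OF assms]]) measurable



lemma sets_unif01[measurable_cong, simp]: "sets unif01 = sets borel"
  unfolding unif01_def by simp
lemma space_unif01[simp]: "space unif01 = UNIV"
  unfolding unif01_def by simp
lemma prob_space_unif01: "prob_space unif01"
  unfolding unif01_def by (rule prob_space_uniform_measure) auto

lemma emeasure_unif01_Ioo:
  assumes "0 \<le> c" "c \<le> 1"
  shows "emeasure unif01 {0<..<c} = ennreal c"
  using assms unfolding unif01_def by (simp add: Int_absorb1 subset_eq divide_ennreal_def)

lemma nn_integral_unif01:
  assumes [measurable]: "f \<in> borel_measurable borel"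
  shows "(\<integral>\<^sup>+x. f x \<partial>unif01) = (\<integral>\<^sup>+x. f x * indicator {0..1} x \<partial>lborel)"
  unfolding unif01_def by (subst nn_integral_uniform_measure) (auto simp: divide_ennreal_def)

lemma nn_integral_powr_unif01:
  assumes "0 < r" "r \<le> 1" "0 \<le> c"
  shows "(\<integral>\<^sup>+y. indicator {0<..r} y * ennreal (y powr c) \<partial>unif01) = ennreal (r powr (c+1) / (c+1))"
proof -
  have "(\<integral>\<^sup>+y. indicator {0<..r} y * ennreal (y powr c) \<partial>unif01)
     = (\<integral>\<^sup>+y. indicator {0<..r} y * ennreal (y powr c) * indicator {0..1} y \<partial>lborel)"
    by (rule nn_integral_unif01) measurable
  also have "\<dots> = (\<integral>\<^sup>+y. ennreal (indicator {0..r} y * y powr c) \<partial>lborel)"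
    using assms by (intro nn_integral_cong) (auto split: split_indicator)
  also have "\<dots> = ennreal (r powr (c+1) / (c+1))"
    by (rule nn_integral_has_integral_lebesgue) (use assms has_integral_powr_from_0[of c r] in auto)
  finally show ?thesis .
qed


abbreviation PU :: "('w \<Rightarrow> real) measure" where
  "PU \<equiv> PiM UNIV (\<lambda>_. unif01)"

lemma product_sigma_finite_unif01: "product_sigma_finite (\<lambda>_. unif01)"
  by (simp add: product_sigma_finite_def prob_space_imp_sigma_finite prob_space_unif01)

lemma prob_space_PU: "prob_space (PU :: ('w::finite \<Rightarrow> real) measure)"
  by (intro prob_space_PiM prob_space_unif01)

lemma space_PU[simp]: "space PU = UNIV"
  by (simp add: space_PiM)

definition Ev :: "('w \<Rightarrow> real) \<Rightarrow> 'w \<Rightarrow> real \<Rightarrow> ('w \<Rightarrow> real) set" where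
  "Ev p w r = {u. 0 < u w \<and> u w \<le> r \<and> (\<forall>v. v \<noteq> w \<and> 0 < p v \<longrightarrow> 0 < u v \<and> u v < u w powr (p v / p w))}"

lemma Ev_sets[measurable]: "Ev p w r \<in> sets (PU :: ('w::finite \<Rightarrow> real) measure)"
proof -
  have "Ev p w r = {u \<in> space (PU :: ('w \<Rightarrow> real) measure). 0 < u w \<and> u w \<le> r \<and> (\<forall>v. v \<noteq> w \<and> 0 < p v \<longrightarrow> 0 < u v \<and> u v < u w powr (p v / p w))}"
    by (simp add: Ev_def)
  also have "\<dots> \<in> sets PU" by measurable
  finally show ?thesis .
qed

lemma prod_if_01:
  assumes "finite A"
  shows "(\<Prod>v\<in>A. if P v then 1 else (0::ennreal)) = (if \<forall>v\<in>A. P v then 1 else 0)"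
proof (cases "\<forall>v\<in>A. P v")
  case True then show ?thesis by (simp add: prod.neutral)
next
  case False then show ?thesis using assms by (auto intro!: prod_zero)
qed

lemma emeasure_Ev:
  fixes p :: "'w::finite \<Rightarrow> real"
  assumes p0: "\<And>v. 0 \<le> p v" and p1: "(\<Sum>v\<in>UNIV. p v) = 1" and w: "0 < p w"
    and r: "0 < r" "r \<le> 1"
  shows "emeasure PU (Ev p w r) = ennreal (p w * r powr (1 / p w))"
proof -
  interpret P: product_sigma_finite "\<lambda>_::'w. unif01" by (rule product_sigma_finite_unif01)
  define c where "c = (1 - p w) / p w"
  have pw1: "p w \<le> 1"
    using p1 p0 member_le_sum[of w UNIV p] by auto
  have c0: "0 \<le> c" using pw1 w by (simp add: c_def)
  have sumrest: "(\<Sum>v\<in>UNIV-{w}. p v / p w) = c"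
    using p1 by (simp add: c_def sum_divide_distrib[symmetric] sum_diff)
  define g where "g y v z = (if (0 < p v \<longrightarrow> 0 < z \<and> z < y powr (p v / p w)) then 1 else (0::ennreal))" for y v and z :: real
  have UN: "insert w (UNIV - {w}) = (UNIV :: 'w set)" by auto
  have "emeasure PU (Ev p w r) = (\<integral>\<^sup>+u. indicator (Ev p w r) u \<partial>PU)"
    by simp
  also have "\<dots> = (\<integral>\<^sup>+ y. (\<integral>\<^sup>+ x. indicator (Ev p w r) (x(w := y)) \<partial>(PiM (UNIV-{w}) (\<lambda>_. unif01))) \<partial>unif01)"
    using P.product_nn_integral_insert_rev[of "UNIV-{w}" w "indicator (Ev p w r)"] UN by simp
  also have "\<dots> = (\<integral>\<^sup>+ y. indicator {0<..r} y * ennreal (y powr c) \<partial>unif01)"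
  proof (intro nn_integral_cong)
    fix y :: real
    have "(\<integral>\<^sup>+ x. indicator (Ev p w r) (x(w := y)) \<partial>(PiM (UNIV-{w}) (\<lambda>_. unif01)))
      = (\<integral>\<^sup>+ x. indicator {0<..r} y * (\<Prod>v\<in>UNIV-{w}. g y v (x v)) \<partial>(PiM (UNIV-{w}) (\<lambda>_. unif01)))"
    proof (intro nn_integral_cong)
      fix x :: "'w \<Rightarrow> real"
      have "(\<Prod>v\<in>UNIV-{w}. g y v (x v)) = (if \<forall>v\<in>UNIV-{w}. (0 < p v \<longrightarrow> 0 < x v \<and> x v < y powr (p v / p w)) then 1 else 0)"
        unfolding g_def by (rule prod_if_01) simp
      then show "indicator (Ev p w r) (x(w := y)) = indicator {0<..r} y * (\<Prod>v\<in>UNIV-{w}. g y v (x v))"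
        by (auto simp: Ev_def split: split_indicator)
    qed
    also have "\<dots> = indicator {0<..r} y * (\<Prod>v\<in>UNIV-{w}. (\<integral>\<^sup>+z. g y v z \<partial>unif01))"
    proof -
      have gm: "g y v \<in> borel_measurable unif01" for v
        unfolding g_def by measurable
      have "(\<integral>\<^sup>+ x. (\<Prod>v\<in>UNIV-{w}. g y v (x v)) \<partial>(PiM (UNIV-{w}) (\<lambda>_. unif01))) = (\<Prod>v\<in>UNIV-{w}. (\<integral>\<^sup>+z. g y v z \<partial>unif01))"
        by (rule P.product_nn_integral_prod) (auto intro: gm)
      moreover have "(\<lambda>x. (\<Prod>v\<in>UNIV-{w}. g y v (x v))) \<in> borel_measurable (PiM (UNIV-{w}) (\<lambda>_. unif01))"
        using gm by measurable
      ultimately show ?thesis by (subst nn_integral_cmult) auto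
    qed
    also have "\<dots> = indicator {0<..r} y * ennreal (y powr c)"
    proof (cases "y \<in> {0<..r}")
      case True
      have "(\<integral>\<^sup>+z. g y v z \<partial>unif01) = ennreal (y powr (p v / p w))" for v
      proof (cases "0 < p v")
        case True
        have "g y v = indicator {0<..<y powr (p v / p w)}"
          using True by (auto simp: g_def fun_eq_iff split: split_indicator)
        moreover have "y powr (p v / p w) \<le> 1"
          using \<open>y \<in> {0<..r}\<close> r p0 w by (auto intro!: powr_le1)
        ultimately show ?thesis
          by (simp add: emeasure_unif01_Ioo)
      next
        case False
        then have "g y v = (\<lambda>_. 1)" by (auto simp: g_def)
        moreover have "p v = 0" using False p0[of v] by simp
        ultimately show ?thesis
          using \<open>y \<in> {0<..r}\<close> prob_space.emeasure_space_1[OF prob_space_unif01] by simp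
      qed
      then have "(\<Prod>v\<in>UNIV-{w}. (\<integral>\<^sup>+z. g y v z \<partial>unif01)) = ennreal (\<Prod>v\<in>UNIV-{w}. y powr (p v / p w))"
        by (simp add: prod_ennreal)
      also have "\<dots> = ennreal (y powr c)"
        using True powr_sum[of y "\<lambda>v. p v / p w" "UNIV-{w}"] by (simp add: sumrest)
      finally show ?thesis by simp
    qed simp
    finally show "(\<integral>\<^sup>+ x. indicator (Ev p w r) (x(w := y)) \<partial>(PiM (UNIV-{w}) (\<lambda>_. unif01))) = indicator {0<..r} y * ennreal (y powr c)" .
  qed
  also have "\<dots> = ennreal (r powr (c+1) / (c+1))"
    by (rule nn_integral_powr_unif01) (use r c0 in auto)
  also have "r powr (c+1) / (c+1) = p w * r powr (1 / p w)"
    using w by (simp add: c_def field_simps)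
  finally show ?thesis .
qed

lemma sets_PU: "sets (PU::('w \<Rightarrow> real) measure) = sets vecM"
  by (rule sets_PiM_cong) auto

lemma ln_lt_from_powr:
  fixes a b pv pw :: real
  assumes "0 < a" "0 < b" "0 < pv" "0 < pw" "a < b powr (pv / pw)"
  shows "ln a / pv < ln b / pw"
proof -
  have "ln a < ln (b powr (pv / pw))" using assms by (subst ln_less_cancel_iff) auto
  also have "\<dots> = (pv / pw) * ln b" using assms by (simp add: ln_powr)
  finally have "ln a < (pv / pw) * ln b" .
  then have "ln a / pv < ((pv / pw) * ln b) / pv" using assms(3) by (rule divide_strict_right_mono)
  also have "((pv / pw) * ln b) / pv = ln b / pw" using assms by (simp add: field_simps)
  finally show ?thesis .
qed

lemma decoder_Ev:
  fixes p :: "'w \<Rightarrow> real"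
  assumes w: "0 < p w" and u: "u \<in> Ev p w r"
  shows "decoder p u = w"
  unfolding decoder_def
proof (rule some_equality)
  have lt: "ln (u v) / p v < ln (u w) / p w" if "v \<noteq> w" "0 < p v" for v
    using u that w by (intro ln_lt_from_powr) (auto simp: Ev_def)
  show "0 < p w \<and> (\<forall>v'. 0 < p v' \<longrightarrow> ln (u v') / p v' \<le> ln (u w) / p w)"
    using w lt by (metis less_eq_real_def)
  fix v assume "0 < p v \<and> (\<forall>v'. 0 < p v' \<longrightarrow> ln (u v') / p v' \<le> ln (u v) / p v)"
  then show "v = w" using lt[of v] w by force
qed

lemma Ev_disjoint:
  fixes p :: "'w \<Rightarrow> real"
  assumes "0 < p w" "0 < p w'" "w \<noteq> w'"
  shows "Ev p w r \<inter> Ev p w' r' = {}"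
  using decoder_Ev[of p w _ r] decoder_Ev[of p w' _ r'] assms by auto

lemma Ev_mono: "r \<le> r' \<Longrightarrow> Ev p w r \<subseteq> Ev p w r'"
  by (auto simp: Ev_def)

lemma measure_UN_Ev:
  fixes p :: "'w::finite \<Rightarrow> real"
  assumes p0: "\<And>v. 0 \<le> p v" and p1: "(\<Sum>v\<in>UNIV. p v) = 1"
    and r: "0 < r" "r \<le> 1"
  shows "measure PU (\<Union>w\<in>{w. 0 < p w}. Ev p w r) = (\<Sum>w\<in>{w. 0 < p w}. p w * r powr (1 / p w))"
proof -
  interpret PU: prob_space "PU :: ('w \<Rightarrow> real) measure" by (rule prob_space_PU)
  have "measure PU (\<Union>w\<in>{w. 0 < p w}. Ev p w r) = (\<Sum>w\<in>{w. 0 < p w}. measure PU (Ev p w r))"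
    by (rule PU.finite_measure_finite_Union)
       (auto simp: disjoint_family_on_def Ev_disjoint)
  also have "\<dots> = (\<Sum>w\<in>{w. 0 < p w}. p w * r powr (1 / p w))"
  proof (rule sum.cong[OF refl])
    fix w assume "w \<in> {w. 0 < p w}"
    then have "emeasure PU (Ev p w r) = ennreal (p w * r powr (1 / p w))"
      by (intro emeasure_Ev[OF p0 p1 _ r]) auto
    moreover have "0 \<le> p w * r powr (1 / p w)" using p0[of w] by simp
    ultimately show "measure PU (Ev p w r) = p w * r powr (1 / p w)"
      unfolding measure_def by simp
  qed
  finally show ?thesis .
qed

lemma sum_pos_part:
  fixes p :: "'w::finite \<Rightarrow> real"
  assumes p0: "\<And>v. 0 \<le> p v"
  shows "(\<Sum>w\<in>{w. 0 < p w}. p w * f w) = (\<Sum>w\<in>UNIV. p w * f w)"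
proof (rule sum.mono_neutral_left)
  show "\<forall>i\<in>UNIV - {w. 0 < p w}. p i * f i = 0"
  proof
    fix i assume "i \<in> UNIV - {w. 0 < p w}"
    then have "p i = 0" using p0[of i] by auto
    then show "p i * f i = 0" by simp
  qed
qed auto

lemma Gumbel_distr:
  fixes p :: "'w::finite \<Rightarrow> real"
  assumes p0: "\<And>v. 0 \<le> p v" and p1: "(\<Sum>v\<in>UNIV. p v) = 1"
  shows "distr PU borel (\<lambda>u. u (decoder p u)) = mu1 p"
proof -
  interpret PU: prob_space "PU :: ('w \<Rightarrow> real) measure" by (rule prob_space_PU)
  let ?Y = "\<lambda>u::'w \<Rightarrow> real. u (decoder p u)"
  let ?S = "{w. 0 < p w}"
  define D where "D = (\<Union>w\<in>?S. Ev p w 1)"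
  have Ym[measurable]: "?Y \<in> borel_measurable PU"
    by (rule measurable_decoder_eval[OF measurable_const measurable_ident_sets[OF sets_PU]]) (auto simp: space_PiM)
  have Dm[measurable]: "D \<in> sets PU" unfolding D_def by auto
  have "measure PU D = 1"
  proof -
    have "(\<Sum>w\<in>?S. p w * 1) = (\<Sum>w\<in>UNIV. p w * 1)" by (rule sum_pos_part[OF p0])
    then show ?thesis using measure_UN_Ev[OF p0 p1, of 1] p1 by (simp add: D_def)
  qed
  then have AED: "AE u in PU. u \<in> D"
    by (subst PU.AE_in_set_eq_1) auto
  have cdfY: "measure PU {u. ?Y u \<le> r} = cdf1 p r" for r
  proof -
    have setm: "{u. ?Y u \<le> r} \<in> sets PU"
      using measurable_sets[OF Ym, of "{..r}"] by (simp add: vimage_def)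
    have eq1: "measure PU {u. ?Y u \<le> r} = measure PU (\<Union>w\<in>?S. Ev p w (min r 1))"
    proof (rule measure_eq_AE)
      show "AE u in PU. (u \<in> {u. ?Y u \<le> r}) = (u \<in> (\<Union>w\<in>?S. Ev p w (min r 1)))"
        using AED
      proof eventually_elim
        case (elim u)
        then obtain w where w: "0 < p w" "u \<in> Ev p w 1" unfolding D_def by auto
        then have dw: "decoder p u = w" by (rule decoder_Ev)
        have A: "?Y u \<le> r \<longleftrightarrow> u \<in> Ev p w (min r 1)" using w dw by (auto simp: Ev_def)
        have B: "u \<notin> Ev p w' (min r 1)" if "w' \<noteq> w" "0 < p w'" for w'
          using that w Ev_disjoint[of p w w' 1 "min r 1"] Ev_mono[of "min r 1" 1 p w'] by auto
        have "u \<in> (\<Union>w\<in>?S. Ev p w (min r 1)) \<longleftrightarrow> u \<in> Ev p w (min r 1)"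
        proof
          assume "u \<in> (\<Union>w\<in>?S. Ev p w (min r 1))"
          then obtain w' where "0 < p w'" "u \<in> Ev p w' (min r 1)" by auto
          then show "u \<in> Ev p w (min r 1)" using B[of w'] by (cases "w' = w") auto
        next
          assume "u \<in> Ev p w (min r 1)"
          then show "u \<in> (\<Union>w\<in>?S. Ev p w (min r 1))" using w(1) by auto
        qed
        then show ?case using A by simp
      qed
    qed (use setm in auto)
    show ?thesis
    proof (cases "r \<le> 0")
      case True
      then have "(\<Union>w\<in>?S. Ev p w (min r 1)) = {}" by (auto simp: Ev_def)
      then show ?thesis using eq1 True by (simp add: cdf1_def)
    next
      case False
      then have "measure PU {u. ?Y u \<le> r} = (\<Sum>w\<in>?S. p w * (min r 1) powr (1 / p w))"
        using eq1 measure_UN_Ev[OF p0 p1, of "min r 1"] by simp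
      also have "\<dots> = (\<Sum>w\<in>UNIV. p w * (min r 1) powr (1 / p w))"
        by (rule sum_pos_part[OF p0])
      also have "\<dots> = cdf1 p r"
        using False p1 by (auto simp: cdf1_def min_def)
      finally show ?thesis .
    qed
  qed
  define Dt where "Dt = distr PU borel ?Y"
  have rdD: "real_distribution Dt"
    unfolding Dt_def real_distribution_def real_distribution_axioms_def by (auto intro!: PU.prob_space_distr)
  interpret rd: real_distribution Dt by (rule rdD)
  have cdfD: "cdf Dt = cdf1 p"
  proof
    fix r
    have "cdf Dt r = measure PU (?Y -` {..r} \<inter> space PU)"
      unfolding cdf_def Dt_def by (subst measure_distr) auto
    also have "?Y -` {..r} \<inter> space PU = {u. ?Y u \<le> r}" by auto
    finally show "cdf Dt r = cdf1 p r" using cdfY by simp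
  qed
  have mu: "mu1 p = interval_measure (cdf Dt)" by (simp add: mu1_def cdfD)
  have rdm: "real_distribution (mu1 p)"
    unfolding mu
    by (rule real_distribution_interval_measure)
       (auto simp: rd.cdf_nondecreasing rd.cdf_is_right_cont rd.cdf_lim_at_bot rd.cdf_lim_at_top_prob)
  have "cdf (mu1 p) = cdf Dt"
    unfolding mu
    by (rule cdf_interval_measure)
       (auto simp: rd.cdf_nondecreasing rd.cdf_is_right_cont rd.cdf_lim_at_bot)
  then have "Dt = mu1 p" by (intro cdf_unique rdD rdm) simp
  then show ?thesis by (simp add: Dt_def)
qed

lemma h_borel: "integrable unif01 h \<Longrightarrow> h \<in> borel_measurable borel"
  using borel_measurable_integrable measurable_cong_sets sets_unif01 by blast

lemma distr_PU_component: "distr PU unif01 (\<lambda>u. u v) = unif01"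
  by (rule distr_PiM_component) (auto simp: prob_space_unif01)

lemma PU_component_integral:
  fixes h :: "real \<Rightarrow> real"
  assumes h: "integrable unif01 h"
  shows "integrable PU (\<lambda>u. h (u v))" "(\<integral>u. h (u v) \<partial>PU) = (\<integral>y. h y \<partial>unif01)"
proof -
  have hm: "h \<in> borel_measurable unif01" using h by auto
  have cm: "(\<lambda>u. u v) \<in> measurable PU unif01"
    by (rule measurable_component_singleton) simp
  show "integrable PU (\<lambda>u. h (u v))"
    using integrable_distr_eq[OF cm hm] h unfolding distr_PU_component by simp
  show "(\<integral>u. h (u v) \<partial>PU) = (\<integral>y. h y \<partial>unif01)"
    using integral_distr[OF cm hm] by (simp add: distr_PU_component)
qed

lemma abs_le_sum_abs:
  fixes f :: "'w::finite \<Rightarrow> real"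
  shows "\<bar>f v\<bar> \<le> (\<Sum>w\<in>UNIV. \<bar>f w\<bar>)"
  by (rule member_le_sum) auto

lemma Gumbel_integral:
  fixes p :: "'w::finite \<Rightarrow> real" and h :: "real \<Rightarrow> real"
  assumes p0: "\<And>v. 0 \<le> p v" and p1: "(\<Sum>v\<in>UNIV. p v) = 1" and h: "integrable unif01 h"
  shows "integrable PU (\<lambda>u. h (u (decoder p u)))"
    "(\<integral>u. h (u (decoder p u)) \<partial>PU) = (\<integral>y. h y \<partial>mu1 p)"
proof -
  have hm[measurable]: "h \<in> borel_measurable borel" by (rule h_borel[OF h])
  have Ym: "(\<lambda>u::'w \<Rightarrow> real. u (decoder p u)) \<in> borel_measurable PU"
    by (rule measurable_decoder_eval[OF measurable_const measurable_ident_sets[OF sets_PU]]) (auto simp: space_PiM)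
  have "integrable PU (\<lambda>u. \<Sum>w\<in>UNIV. \<bar>h (u w)\<bar>)"
    apply (rule Bochner_Integration.integrable_sum)
    apply (rule integrable_abs)
    apply (rule PU_component_integral(1)[OF h])
    done
  then show int: "integrable PU (\<lambda>u. h (u (decoder p u)))"
  proof (rule Bochner_Integration.integrable_bound)
    show "(\<lambda>u. h (u (decoder p u))) \<in> borel_measurable PU" using Ym by measurable
    show "AE u in PU. norm (h (u (decoder p u))) \<le> norm (\<Sum>w\<in>UNIV. \<bar>h (u w)\<bar>)"
    proof (rule AE_I2)
      fix u :: "'w \<Rightarrow> real"
      have "\<bar>h (u (decoder p u))\<bar> \<le> (\<Sum>w\<in>UNIV. \<bar>h (u w)\<bar>)" by (rule abs_le_sum_abs)
      moreover have "0 \<le> (\<Sum>w\<in>UNIV. \<bar>h (u w)\<bar>)" by (rule sum_nonneg) auto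
      ultimately show "norm (h (u (decoder p u))) \<le> norm (\<Sum>w\<in>UNIV. \<bar>h (u w)\<bar>)" by simp
    qed
  qed
  show "(\<integral>u. h (u (decoder p u)) \<partial>PU) = (\<integral>y. h y \<partial>mu1 p)"
    using integral_distr[OF Ym hm] Gumbel_distr[OF p0 p1] by simp
qed

lemma freeze:
  fixes M F :: "'a measure" and X :: "'a \<Rightarrow> 'w::finite \<Rightarrow> real" and f :: "'a \<times> ('w \<Rightarrow> real) \<Rightarrow> real"
  assumes M: "prob_space M" and sub: "sets F \<subseteq> sets M" "space F = space M"
    and X: "X \<in> measurable M vecM"
    and ind: "prob_space.indep_set M (sets F) (gen M X vecM)"
    and dX: "distr M vecM X = PU"
    and fm: "f \<in> borel_measurable (F \<Otimes>\<^sub>M vecM)"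
    and fi: "integrable M (\<lambda>\<omega>. f (\<omega>, X \<omega>))"
  shows "integrable M (\<lambda>\<omega>. \<integral>u. f (\<omega>, u) \<partial>PU)"
    "(\<lambda>\<omega>. \<integral>u. f (\<omega>, u) \<partial>PU) \<in> borel_measurable F"
    "(\<integral>\<omega>. f (\<omega>, X \<omega>) \<partial>M) = (\<integral>\<omega>. (\<integral>u. f (\<omega>, u) \<partial>PU) \<partial>M)"
proof -
  interpret prob_space M by (rule M)
  have idm: "(\<lambda>x. x) \<in> measurable M F"
  proof (rule measurableI)
    fix A assume "A \<in> sets F"
    moreover then have "A \<subseteq> space M" using sets.sets_into_space[of A F] sub by auto
    ultimately show "(\<lambda>x. x) -` A \<inter> space M \<in> sets M" using sub by (simp add: Int_absorb2 subset_iff)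
  qed (use sub in auto)
  define MF where "MF = distr M F (\<lambda>x. x)"
  have pMF: "prob_space MF" unfolding MF_def by (rule prob_space_distr[OF idm])
  interpret P2: pair_sigma_finite MF "PU :: ('w \<Rightarrow> real) measure"
    by (simp add: pair_sigma_finite_def prob_space_imp_sigma_finite pMF prob_space_PU)
  have pm: "(\<lambda>x. (x, X x)) \<in> measurable M (F \<Otimes>\<^sub>M vecM)"
    using idm X by measurable
  have setsP: "sets (MF \<Otimes>\<^sub>M (PU::('w \<Rightarrow> real) measure)) = sets (F \<Otimes>\<^sub>M (vecM::('w \<Rightarrow> real) measure))"
    by (rule sets_pair_measure_cong) (simp_all add: MF_def sets_PU)
  have J: "MF \<Otimes>\<^sub>M PU = distr M (F \<Otimes>\<^sub>M vecM) (\<lambda>x. (x, X x))"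
  proof (rule pair_measure_eqI)
    show "sigma_finite_measure MF" by (simp add: prob_space_imp_sigma_finite pMF)
    show "sigma_finite_measure (PU :: ('w \<Rightarrow> real) measure)" by (rule prob_space_imp_sigma_finite[OF prob_space_PU])
    show "sets (MF \<Otimes>\<^sub>M PU) = sets (distr M (F \<Otimes>\<^sub>M vecM) (\<lambda>x. (x, X x)))"
      using setsP by simp
    fix A B assume A: "A \<in> sets MF" and B: "B \<in> sets (PU :: ('w \<Rightarrow> real) measure)"
    have AF: "A \<in> sets F" using A by (simp add: MF_def)
    have BV: "B \<in> sets (vecM :: ('w \<Rightarrow> real) measure)" using B sets_PU by blast
    have AM: "A \<in> sets M" "A \<subseteq> space M" using AF sub sets.sets_into_space[OF AF] by auto
    have XB: "X -` B \<inter> space M \<in> gen M X vecM" using BV by (auto simp: gen_def)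
    have XBM: "X -` B \<inter> space M \<in> sets M" using measurable_sets[OF X BV] .
    have "emeasure (distr M (F \<Otimes>\<^sub>M vecM) (\<lambda>x. (x, X x))) (A \<times> B) = emeasure M ((\<lambda>x. (x, X x)) -` (A \<times> B) \<inter> space M)"
      by (rule emeasure_distr[OF pm]) (use AF BV in auto)
    also have "(\<lambda>x. (x, X x)) -` (A \<times> B) \<inter> space M = A \<inter> (X -` B \<inter> space M)"
      using AM by auto
    also have "emeasure M (A \<inter> (X -` B \<inter> space M)) = ennreal (prob A * prob (X -` B \<inter> space M))"
      using indep_setD[OF ind AF XB] by (simp add: emeasure_eq_measure)
    also have "\<dots> = emeasure M A * emeasure M (X -` B \<inter> space M)"
      by (simp add: emeasure_eq_measure ennreal_mult)
    also have "emeasure M A = emeasure MF A"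
      unfolding MF_def using AF AM by (subst emeasure_distr[OF idm]) (auto simp: Int_absorb2)
    also have "emeasure M (X -` B \<inter> space M) = emeasure PU B"
      unfolding dX[symmetric] using BV by (subst emeasure_distr[OF X]) auto
    finally show "emeasure MF A * emeasure PU B = emeasure (distr M (F \<Otimes>\<^sub>M vecM) (\<lambda>x. (x, X x))) (A \<times> B)"
      by simp
  qed
  have fm': "f \<in> borel_measurable (MF \<Otimes>\<^sub>M PU)"
    unfolding measurable_cong_sets[OF setsP refl] by (rule fm)
  have int: "integrable (MF \<Otimes>\<^sub>M PU) f"
    unfolding J using integrable_distr_eq[OF pm fm] fi by simp
  have intF: "integrable MF (\<lambda>x. \<integral>y. f (x, y) \<partial>PU)"
    by (rule P2.integrable_fst'[OF int])
  then have gm: "(\<lambda>x. \<integral>y. f (x, y) \<partial>PU) \<in> borel_measurable F"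
    using borel_measurable_integrable[OF intF] measurable_cong_sets[of MF F] by (simp add: MF_def)
  then show "(\<lambda>\<omega>. \<integral>u. f (\<omega>, u) \<partial>PU) \<in> borel_measurable F" .
  show "integrable M (\<lambda>\<omega>. \<integral>u. f (\<omega>, u) \<partial>PU)"
    using intF integrable_distr_eq[OF idm gm] by (simp add: MF_def)
  have "(\<integral>\<omega>. f (\<omega>, X \<omega>) \<partial>M) = integral\<^sup>L (MF \<Otimes>\<^sub>M PU) f"
    unfolding J by (rule integral_distr[OF pm fm, symmetric])
  also have "\<dots> = (\<integral>x. (\<integral>y. f (x, y) \<partial>PU) \<partial>MF)"
    by (rule P2.integral_fst'[OF int, symmetric])
  also have "\<dots> = (\<integral>\<omega>. (\<integral>u. f (\<omega>, u) \<partial>PU) \<partial>M)"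
    unfolding MF_def by (rule integral_distr[OF idm gm])
  finally show "(\<integral>\<omega>. f (\<omega>, X \<omega>) \<partial>M) = (\<integral>\<omega>. (\<integral>u. f (\<omega>, u) \<partial>PU) \<partial>M)" .
qed

lemma sfs_of_prob:
  assumes M: "prob_space M" and sub: "sets F \<subseteq> sets M" "space F = space M"
  shows "sigma_finite_subalgebra M F"
proof -
  interpret prob_space M by (rule M)
  have "finite_measure_subalgebra M F"
    by unfold_locales (use sub in \<open>auto simp: subalgebra_def\<close>)
  then show ?thesis by (rule finite_measure_subalgebra_is_sigma_finite)
qed

lemma CE_tool:
  fixes M Fx :: "'a measure" and C :: "'a set" and q X :: "'a \<Rightarrow> real"
  assumes M: "prob_space M" and sub: "sets Fx \<subseteq> sets M" "space Fx = space M"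
    and C: "C \<in> sets M"
    and qm: "q \<in> borel_measurable Fx" and qi: "integrable M q"
    and hyp: "\<And>A. A \<in> sets Fx \<Longrightarrow> measure M (A \<inter> C) = (\<integral>\<omega>. indicator A \<omega> * q \<omega> \<partial>M)"
    and Xm: "X \<in> borel_measurable Fx" and Xi: "integrable M (\<lambda>\<omega>. X \<omega> * indicator C \<omega>)"
  shows "(\<integral>\<omega>. X \<omega> * indicator C \<omega> \<partial>M) = (\<integral>\<omega>. X \<omega> * q \<omega> \<partial>M)"
proof -
  interpret prob_space M by (rule M)
  interpret S: sigma_finite_subalgebra M Fx by (rule sfs_of_prob[OF M sub])
  have subalg: "subalgebra M Fx" using sub by (simp add: subalgebra_def)
  have Cm: "indicator C \<in> borel_measurable M" using C by simp
  have ae: "AE \<omega> in M. real_cond_exp M Fx (indicator C) \<omega> = q \<omega>"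
  proof (rule S.real_cond_exp_charact)
    fix A assume A: "A \<in> sets Fx"
    then have AM: "A \<in> sets M" using sub by auto
    have "(\<integral>x\<in>A. indicator C x \<partial>M) = (\<integral>x. indicator (A \<inter> C) x \<partial>M)"
      unfolding set_lebesgue_integral_def by (rule Bochner_Integration.integral_cong) (auto split: split_indicator)
    also have "\<dots> = measure M (A \<inter> C)"
      using AM C by (simp add: Int_absorb2 sets.sets_into_space sets.Int)
    also have "\<dots> = (\<integral>x\<in>A. q x \<partial>M)"
      unfolding set_lebesgue_integral_def using hyp[OF A] by simp
    finally show "(\<integral>x\<in>A. indicator C x \<partial>M) = (\<integral>x\<in>A. q x \<partial>M)" .
  next
    show "integrable M (indicator C :: 'a \<Rightarrow> real)" using C by (intro integrable_real_indicator) (auto simp: emeasure_eq_measure)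
  qed (use qi qm in auto)
  have Xm': "X \<in> borel_measurable M" by (rule measurable_from_subalg[OF subalg Xm])
  have "(\<integral>\<omega>. X \<omega> * real_cond_exp M Fx (indicator C) \<omega> \<partial>M) = (\<integral>\<omega>. X \<omega> * indicator C \<omega> \<partial>M)"
    by (rule S.real_cond_exp_intg(2)[OF Xi Xm Cm])
  moreover have "(\<integral>\<omega>. X \<omega> * real_cond_exp M Fx (indicator C) \<omega> \<partial>M) = (\<integral>\<omega>. X \<omega> * q \<omega> \<partial>M)"
    using ae by (intro integral_cong_AE) (use Xm' measurable_from_subalg[OF subalg qm] in auto)
  ultimately show ?thesis by simp
qed

lemma gen_sets: "f \<in> measurable M N \<Longrightarrow> gen M f N \<subseteq> sets M"
  by (auto simp: gen_def measurable_sets)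

lemma sigma_sub:
  assumes "G \<subseteq> sets M"
  shows "sets (sigma (space M) G) \<subseteq> sets M" "space (sigma (space M) G) = space M"
proof -
  have "G \<subseteq> Pow (space M)" using assms sets.sets_into_space by auto
  then show "sets (sigma (space M) G) \<subseteq> sets M" "space (sigma (space M) G) = space M"
    using sets.sigma_sets_subset[OF assms] by (auto simp: sets_measure_of space_measure_of_conv)
qed

lemma meas_sigma_gen:
  assumes f: "f \<in> measurable M N" and G: "gen M f N \<subseteq> G" "G \<subseteq> Pow (space M)"
  shows "f \<in> measurable (sigma (space M) G) N"
proof (rule measurableI)
  fix x assume "x \<in> space (sigma (space M) G)"
  then show "f x \<in> space N" using f G by (auto simp: space_measure_of_conv measurable_space)
next
  fix A assume "A \<in> sets N"
  then have "f -` A \<inter> space M \<in> G" using G by (auto simp: gen_def)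
  then show "f -` A \<inter> space (sigma (space M) G) \<in> sets (sigma (space M) G)"
    using G by (auto simp: space_measure_of_conv sets_measure_of)
qed

lemma int_mult_bounded:
  fixes f g :: "'a \<Rightarrow> real"
  assumes "integrable M f" "g \<in> borel_measurable M" "\<And>x. x \<in> space M \<Longrightarrow> \<bar>g x\<bar> \<le> 1"
  shows "integrable M (\<lambda>x. f x * g x)"
proof (rule Bochner_Integration.integrable_bound[OF assms(1)])
  show "(\<lambda>x. f x * g x) \<in> borel_measurable M" using assms borel_measurable_integrable by measurable
  show "AE x in M. norm (f x * g x) \<le> norm (f x)"
  proof (rule AE_I2)
    fix x assume "x \<in> space M"
    then have "\<bar>f x\<bar> * \<bar>g x\<bar> \<le> \<bar>f x\<bar> * 1" using assms(3) by (intro mult_left_mono) auto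
    then show "norm (f x * g x) \<le> norm (f x)" by (simp add: abs_mult)
  qed
qed

theorem lemmaA2:
  fixes M :: "'a measure"
    and n :: nat and eps :: real
    and P :: "nat \<Rightarrow> 'a \<Rightarrow> ('w::finite) \<Rightarrow> real"   (* next-token distributions P_t *)
    and U :: "nat \<Rightarrow> 'a \<Rightarrow> 'w \<Rightarrow> real"               (* xi_t = (U_{t,w})_w *)
    and W :: "nat \<Rightarrow> 'a \<Rightarrow> 'w"                       (* observed tokens w_t *)
    and B :: "nat \<Rightarrow> 'a \<Rightarrow> bool"                     (* watermark coin: w_t = S(P_t,xi_t) *)
    and h :: "real \<Rightarrow> real" and t :: nat
  assumes M: "prob_space M"
    and eps: "0 \<le> eps" "eps \<le> 1"
    and P_meas: "\<And>s. s \<in> {1..n} \<Longrightarrow> P s \<in> measurable M vecM"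
    and P_prob: "\<And>s \<omega> v. s \<in> {1..n} \<Longrightarrow> \<omega> \<in> space M \<Longrightarrow> 0 \<le> P s \<omega> v"
    and P_sum: "\<And>s \<omega>. s \<in> {1..n} \<Longrightarrow> \<omega> \<in> space M \<Longrightarrow> (\<Sum>v\<in>UNIV. P s \<omega> v) = 1"
    and U_meas: "\<And>s. s \<in> {1..n} \<Longrightarrow> U s \<in> measurable M vecM"
    and W_meas: "\<And>s. s \<in> {1..n} \<Longrightarrow> W s \<in> measurable M (count_space UNIV)"
    and B_meas: "\<And>s. s \<in> {1..n} \<Longrightarrow> B s \<in> measurable M (count_space UNIV)"
    \<comment> \<open>(a): xi_1,...,xi_n i.i.d. with i.i.d. U(0,1) entries, xi_t independent of F_{t-1}\<close>
    and U_distr: "\<And>s. s \<in> {1..n} \<Longrightarrow> distr M vecM (U s) = PiM UNIV (\<lambda>_. unif01)"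
    and U_iid: "prob_space.indep_vars M (\<lambda>_. vecM) U {1..n}"
    and U_indep: "\<And>s. s \<in> {1..n} \<Longrightarrow>
        prob_space.indep_set M (sets (filt M P U W s)) (gen M (U s) vecM)"
    \<comment> \<open>(b): with probability eps (independently of F_{t-1} and xi_t), w_t = S(P_t,xi_t)\<close>
    and B_wm: "\<And>s \<omega>. s \<in> {1..n} \<Longrightarrow> \<omega> \<in> space M \<Longrightarrow> B s \<omega> \<Longrightarrow> W s \<omega> = decoder (P s \<omega>) (U s \<omega>)"
    and B_prob: "\<And>s G. s \<in> {1..n} \<Longrightarrow> G \<in> sets (filt_xi M P U W s) \<Longrightarrow>
        measure M (G \<inter> {\<omega>\<in>space M. B s \<omega>}) = eps * measure M G"
    \<comment> \<open>otherwise w_t ~ P_t, conditionally on F_{t-1} independent of xi_t\<close>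
    and B_not: "\<And>s G v. s \<in> {1..n} \<Longrightarrow> G \<in> sets (filt_xi M P U W s) \<Longrightarrow>
        measure M (G \<inter> {\<omega>\<in>space M. \<not> B s \<omega> \<and> W s \<omega> = v})
          = (1 - eps) * (\<integral>\<omega>. indicator G \<omega> * P s \<omega> v \<partial>M)"
    and h_int: "integrable unif01 h"
    and t: "t \<in> {1..n}"
  shows "(AE \<omega> in M. real_cond_exp M (filt M P U W t) (\<lambda>\<omega>. h (U t \<omega> (W t \<omega>))) \<omega>
            = eps * (\<integral>y. h y \<partial>mu1 (P t \<omega>)) + (1 - eps) * (\<integral>y. h y \<partial>unif01))
       \<and> (AE \<omega> in M. real_cond_exp M (sigP M P t) (\<lambda>\<omega>. h (U t \<omega> (W t \<omega>))) \<omega>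
            = eps * (\<integral>y. h y \<partial>mu1 (P t \<omega>)) + (1 - eps) * (\<integral>y. h y \<partial>unif01))"
proof -
  interpret prob_space M by (rule M)
  have t1: "1 \<le> t" "t \<le> n" using t by auto
  have [measurable]: "P t \<in> measurable M vecM" "U t \<in> measurable M vecM"
    "W t \<in> measurable M (count_space UNIV)" "B t \<in> measurable M (count_space UNIV)"
    using P_meas[OF t] U_meas[OF t] W_meas[OF t] B_meas[OF t] by auto
  define Fc where "Fc = filt M P U W t"
  define Fx where "Fx = filt_xi M P U W t"
  define S where "S = sigP M P t"
  define Gen where "Gen = gen M (P t) vecM \<union>
      (\<Union>j\<in>{1..<t}. gen M (W j) (count_space UNIV) \<union> gen M (U j) vecM \<union> gen M (P (Suc j)) vecM)"
  have Fc_eq: "Fc = sigma (space M) Gen" unfolding Fc_def Gen_def filt_def ..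
  have GenM: "Gen \<subseteq> sets M"
  proof -
    have *: "gen M (W j) (count_space UNIV) \<union> gen M (U j) vecM \<union> gen M (P (Suc j)) vecM \<subseteq> sets M"
      if "j \<in> {1..<t}" for j
      using that t1 gen_sets[OF W_meas, of j] gen_sets[OF U_meas, of j] gen_sets[OF P_meas, of "Suc j"] by auto
    show ?thesis unfolding Gen_def
      by (intro Un_least UN_least gen_sets[OF P_meas[OF t]] *)
  qed
  have GenP: "Gen \<subseteq> Pow (space M)" using GenM sets.sets_into_space by auto
  have FcM: "sets Fc \<subseteq> sets M" "space Fc = space M" unfolding Fc_eq by (rule sigma_sub[OF GenM])+
  have setsFc: "sets Fc = sigma_sets (space M) Gen" unfolding Fc_eq using GenP by simp
  have genPt: "gen M (P t) vecM \<subseteq> Gen" by (auto simp: Gen_def)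
  have Pt_Fc[measurable]: "P t \<in> measurable Fc vecM"
    unfolding Fc_eq by (rule meas_sigma_gen[OF P_meas[OF t] genPt GenP])
  have genPt_Fc: "gen M (P t) vecM \<subseteq> sets Fc"
    unfolding setsFc using genPt by auto
  define Gx where "Gx = sets Fc \<union> gen M (U t) vecM"
  have Fx_eq: "Fx = sigma (space M) Gx" unfolding Fx_def Gx_def filt_xi_def Fc_def ..
  have GxM: "Gx \<subseteq> sets M" unfolding Gx_def using FcM gen_sets[OF U_meas[OF t]] by auto
  have GxP: "Gx \<subseteq> Pow (space M)" using GxM sets.sets_into_space by auto
  have FxM: "sets Fx \<subseteq> sets M" "space Fx = space M" unfolding Fx_eq by (rule sigma_sub[OF GxM])+
  have setsFx: "sets Fx = sigma_sets (space M) Gx" unfolding Fx_eq using GxP by simp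
  have FcFx: "sets Fc \<subseteq> sets Fx" unfolding setsFx Gx_def by auto
  have Ut_Fx[measurable]: "U t \<in> measurable Fx vecM"
    unfolding Fx_eq by (rule meas_sigma_gen[OF U_meas[OF t] _ GxP]) (auto simp: Gx_def)
  have Pt_Fx[measurable]: "P t \<in> measurable Fx vecM"
    unfolding Fx_eq by (rule meas_sigma_gen[OF P_meas[OF t] _ GxP]) (use genPt_Fc in \<open>auto simp: Gx_def\<close>)
  have genP_P: "gen M (P t) vecM \<subseteq> Pow (space M)" using gen_sets[OF P_meas[OF t]] sets.sets_into_space by auto
  have S_eq: "S = sigma (space M) (gen M (P t) vecM)" unfolding S_def sigP_def ..
  have SM: "sets S \<subseteq> sets Fc" "space S = space M"
  proof -
    have "sets S = sigma_sets (space M) (gen M (P t) vecM)" unfolding S_eq using genP_P by simp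
    also have "\<dots> \<subseteq> sigma_sets (space M) Gen" by (rule sigma_sets_mono'[OF genPt])
    finally show "sets S \<subseteq> sets Fc" unfolding setsFc .
    show "space S = space M" unfolding S_eq by (simp add: space_measure_of_conv)
  qed
  have Pt_S[measurable]: "P t \<in> measurable S vecM"
    unfolding S_eq by (rule meas_sigma_gen[OF P_meas[OF t] subset_refl genP_P])
  have hm[measurable]: "h \<in> borel_measurable borel" by (rule h_borel[OF h_int])
  have P0: "0 \<le> P t \<omega> v" if "\<omega> \<in> space M" for \<omega> v using P_prob[OF t that] .
  have P1: "(\<Sum>v\<in>UNIV. P t \<omega> v) = 1" if "\<omega> \<in> space M" for \<omega> using P_sum[OF t that] .
  have Ple1: "P t \<omega> v \<le> 1" if "\<omega> \<in> space M" for \<omega> v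
    using member_le_sum[of v UNIV "P t \<omega>"] P0[OF that] P1[OF that] by auto
  define psi where "psi p = (\<integral>u. h (u (decoder p u)) \<partial>PU)" for p :: "'w \<Rightarrow> real"
  define E0 where "E0 = (\<integral>y. h y \<partial>unif01)"
  define g where "g \<omega> = eps * (\<integral>y. h y \<partial>mu1 (P t \<omega>)) + (1 - eps) * E0" for \<omega>
  define Y where "Y \<omega> = h (U t \<omega> (W t \<omega>))" for \<omega>
  define phi where "phi \<omega> = h (U t \<omega> (decoder (P t \<omega>) (U t \<omega>)))" for \<omega>
  have psi_eq: "psi (P t \<omega>) = (\<integral>y. h y \<partial>mu1 (P t \<omega>))" if "\<omega> \<in> space M" for \<omega>
    unfolding psi_def using Gumbel_integral(2)[OF P0[OF that] P1[OF that] h_int] .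
  have psim[measurable]: "psi \<in> borel_measurable vecM"
  proof -
    interpret PUs: sigma_finite_measure "PU :: ('w \<Rightarrow> real) measure"
      by (rule prob_space_imp_sigma_finite[OF prob_space_PU])
    have sndm: "snd \<in> measurable (vecM \<Otimes>\<^sub>M (PU :: ('w \<Rightarrow> real) measure)) vecM"
      using measurable_snd measurable_cong_sets[OF refl sets_PU] by blast
    have "(\<lambda>x. snd x (decoder (fst x) (snd x))) \<in> borel_measurable (vecM \<Otimes>\<^sub>M (PU :: ('w \<Rightarrow> real) measure))"
      by (rule measurable_decoder_eval[OF measurable_fst sndm])
    then have "(\<lambda>x. h (snd x (decoder (fst x) (snd x)))) \<in> borel_measurable (vecM \<Otimes>\<^sub>M (PU :: ('w \<Rightarrow> real) measure))"
      by measurable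
    then have "case_prod (\<lambda>p u. h (u (decoder p u))) \<in> borel_measurable (vecM \<Otimes>\<^sub>M (PU :: ('w \<Rightarrow> real) measure))"
      by (simp add: case_prod_beta')
    then show ?thesis unfolding psi_def by (rule PUs.borel_measurable_lebesgue_integral)
  qed
  have hv_int: "integrable M (\<lambda>\<omega>. h (U t \<omega> v))" for v
  proof -
    have "integrable (distr M vecM (U t)) (\<lambda>u. h (u v))"
      unfolding U_distr[OF t] by (rule PU_component_integral(1)[OF h_int])
    then show ?thesis by (subst integrable_distr_eq[symmetric, OF U_meas[OF t]]) measurable
  qed
  have bnd_int: "integrable M (\<lambda>\<omega>. \<Sum>v\<in>UNIV. \<bar>h (U t \<omega> v)\<bar>)"
    by (rule Bochner_Integration.integrable_sum, rule integrable_abs, rule hv_int)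
  have bnd2: "\<bar>h (U t \<omega> w)\<bar> \<le> (\<Sum>v\<in>UNIV. \<bar>h (U t \<omega> v)\<bar>)" for \<omega> w
    by (rule abs_le_sum_abs)
  have bnd: "norm (h (U t \<omega> w)) \<le> norm (\<Sum>v\<in>UNIV. \<bar>h (U t \<omega> v)\<bar>)" for \<omega> w
  proof -
    have "\<bar>h (U t \<omega> w)\<bar> \<le> (\<Sum>v\<in>UNIV. \<bar>h (U t \<omega> v)\<bar>)" by (rule abs_le_sum_abs)
    moreover have "0 \<le> (\<Sum>v\<in>UNIV. \<bar>h (U t \<omega> v)\<bar>)" by (rule sum_nonneg) auto
    ultimately show ?thesis by simp
  qed
  have Ym[measurable]: "Y \<in> borel_measurable M"
  proof -
    have "(\<lambda>\<omega>. U t \<omega> (W t \<omega>)) \<in> borel_measurable M"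
      by (rule measurable_compose_countable[where f="\<lambda>i \<omega>. U t \<omega> i"]) measurable
    then show ?thesis unfolding Y_def by measurable
  qed
  have Yi: "integrable M Y"
    by (rule Bochner_Integration.integrable_bound[OF bnd_int Ym]) (use bnd2 in \<open>auto simp: Y_def\<close>)
  have phim_Fx[measurable]: "phi \<in> borel_measurable Fx"
  proof -
    have "(\<lambda>\<omega>. U t \<omega> (decoder (P t \<omega>) (U t \<omega>))) \<in> borel_measurable Fx"
      by (rule measurable_decoder_eval[OF Pt_Fx Ut_Fx])
    then show ?thesis unfolding phi_def by measurable
  qed
  have subFx: "subalgebra M Fx" using FxM by (simp add: subalgebra_def)
  have subFc: "subalgebra M Fc" using FcM by (simp add: subalgebra_def)
  have subS: "subalgebra M S" using SM FcM by (auto simp: subalgebra_def)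
  have phim: "phi \<in> borel_measurable M" by (rule measurable_from_subalg[OF subFx phim_Fx])
  have phii: "integrable M phi"
    by (rule Bochner_Integration.integrable_bound[OF bnd_int phim]) (use bnd2 in \<open>auto simp: phi_def\<close>)
  have key: "integrable M (\<lambda>\<omega>. indicator G \<omega> * g \<omega>) \<and>
      (\<integral>\<omega>. indicator G \<omega> * Y \<omega> \<partial>M) = (\<integral>\<omega>. indicator G \<omega> * g \<omega> \<partial>M)" if G: "G \<in> sets Fc" for G
  proof -
    have GM: "G \<in> sets M" using G FcM by auto
    have GFx: "G \<in> sets Fx" using G FcFx by auto
    define Bs where "Bs = {\<omega> \<in> space M. B t \<omega>}"
    define Cs where "Cs v = {\<omega> \<in> space M. \<not> B t \<omega> \<and> W t \<omega> = v}" for v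
    have Bs_M: "Bs \<in> sets M" unfolding Bs_def by measurable
    have Cs_M: "Cs v \<in> sets M" for v unfolding Cs_def by measurable
    define X1 where "X1 = (\<lambda>\<omega>. indicator G \<omega> * phi \<omega>)"
    define X2 where "X2 = (\<lambda>v \<omega>. indicator G \<omega> * h (U t \<omega> v))"
    define q2 where "q2 = (\<lambda>v \<omega>. (1 - eps) * P t \<omega> v)"
    have X1m: "X1 \<in> borel_measurable Fx" unfolding X1_def using GFx by measurable
    have X2m: "X2 v \<in> borel_measurable Fx" for v
    proof -
      have "(\<lambda>\<omega>. U t \<omega> v) \<in> borel_measurable Fx" by measurable
      then show ?thesis unfolding X2_def using GFx by measurable
    qed
    have q2m: "q2 v \<in> borel_measurable Fx" for v unfolding q2_def by measurable
    have q2b: "\<bar>q2 v \<omega>\<bar> \<le> 1" if "\<omega> \<in> space M" for v \<omega>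
      using P0[OF that, of v] Ple1[OF that, of v] eps by (auto simp: q2_def abs_mult intro: mult_le_one)
    have X1i: "integrable M X1"
      using int_mult_bounded[OF phii, of "indicator G"] GM by (simp add: X1_def mult.commute)
    have X2i: "integrable M (X2 v)" for v
      using int_mult_bounded[OF hv_int[of v], of "indicator G"] GM by (simp add: X2_def mult.commute)
    have X1Bi: "integrable M (\<lambda>\<omega>. X1 \<omega> * indicator Bs \<omega>)"
      by (rule int_mult_bounded[OF X1i]) (use Bs_M in auto)
    have X2Ci: "integrable M (\<lambda>\<omega>. X2 v \<omega> * indicator (Cs v) \<omega>)" for v
      by (rule int_mult_bounded[OF X2i]) (use Cs_M in auto)
    have X2qi: "integrable M (\<lambda>\<omega>. X2 v \<omega> * q2 v \<omega>)" for v
      by (rule int_mult_bounded[OF X2i]) (use q2b measurable_from_subalg[OF subFx q2m] in auto)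
    have dec: "indicator G \<omega> * Y \<omega> = X1 \<omega> * indicator Bs \<omega> + (\<Sum>v\<in>UNIV. X2 v \<omega> * indicator (Cs v) \<omega>)"
      if \<omega>: "\<omega> \<in> space M" for \<omega>
    proof (cases "B t \<omega>")
      case True
      then have "W t \<omega> = decoder (P t \<omega>) (U t \<omega>)" by (rule B_wm[OF t \<omega>])
      then show ?thesis using True \<omega> by (simp add: X1_def Y_def phi_def Bs_def Cs_def)
    next
      case False
      have "(\<Sum>v\<in>UNIV. X2 v \<omega> * indicator (Cs v) \<omega>) = (\<Sum>v\<in>UNIV. if v = W t \<omega> then X2 v \<omega> else 0)"
        using False \<omega> by (intro sum.cong) (auto simp: Cs_def)
      also have "\<dots> = X2 (W t \<omega>) \<omega>" by simp
      finally show ?thesis using False \<omega> by (simp add: X2_def Y_def Bs_def)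
    qed
    have CE1: "(\<integral>\<omega>. X1 \<omega> * indicator Bs \<omega> \<partial>M) = (\<integral>\<omega>. X1 \<omega> * eps \<partial>M)"
    proof (rule CE_tool[OF M FxM Bs_M _ _ _ X1m X1Bi])
      fix A assume A: "A \<in> sets Fx"
      then have AM: "A \<in> sets M" using FxM by auto
      have "measure M (A \<inter> Bs) = eps * measure M A" unfolding Bs_def by (rule B_prob[OF t A[unfolded Fx_def]])
      also have "\<dots> = (\<integral>\<omega>. indicator A \<omega> * eps \<partial>M)" using AM by (simp add: Int_absorb2 sets.sets_into_space)
      finally show "measure M (A \<inter> Bs) = (\<integral>\<omega>. indicator A \<omega> * eps \<partial>M)" .
    qed auto
    have CE2: "(\<integral>\<omega>. X2 v \<omega> * indicator (Cs v) \<omega> \<partial>M) = (\<integral>\<omega>. X2 v \<omega> * q2 v \<omega> \<partial>M)" for v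
    proof (rule CE_tool[OF M FxM Cs_M q2m _ _ X2m X2Ci])
      show "integrable M (q2 v)"
        using int_mult_bounded[of M "\<lambda>_. 1" "q2 v"] q2b measurable_from_subalg[OF subFx q2m] by simp
      fix A assume A: "A \<in> sets Fx"
      have "measure M (A \<inter> Cs v) = (1 - eps) * (\<integral>\<omega>. indicator A \<omega> * P t \<omega> v \<partial>M)"
        unfolding Cs_def by (rule B_not[OF t A[unfolded Fx_def]])
      also have "\<dots> = (\<integral>\<omega>. indicator A \<omega> * q2 v \<omega> \<partial>M)"
        by (simp add: q2_def mult.left_commute)
      finally show "measure M (A \<inter> Cs v) = (\<integral>\<omega>. indicator A \<omega> * q2 v \<omega> \<partial>M)" .
    qed
    have UdistP: "distr M vecM (U t) = PU" by (rule U_distr[OF t])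
    have Uind: "indep_set (sets Fc) (gen M (U t) vecM)" unfolding Fc_def by (rule U_indep[OF t])
    define f1 where "f1 = (\<lambda>x::'a \<times> ('w \<Rightarrow> real). indicator G (fst x) * h (snd x (decoder (P t (fst x)) (snd x))))"
    have f1m: "f1 \<in> borel_measurable (Fc \<Otimes>\<^sub>M vecM)"
    proof -
      have "(\<lambda>x. snd x (decoder (P t (fst x)) (snd x))) \<in> borel_measurable (Fc \<Otimes>\<^sub>M (vecM :: ('w \<Rightarrow> real) measure))"
        by (rule measurable_decoder_eval) measurable
      then show ?thesis unfolding f1_def using G by measurable
    qed
    have f1X: "(\<lambda>\<omega>. f1 (\<omega>, U t \<omega>)) = X1" by (simp add: f1_def X1_def phi_def fun_eq_iff)
    have f1i: "integrable M (\<lambda>\<omega>. f1 (\<omega>, U t \<omega>))" unfolding f1X by (rule X1i)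
    note FR1 = freeze[OF M FcM U_meas[OF t] Uind UdistP f1m f1i]
    have inner1: "(\<lambda>\<omega>. \<integral>u. f1 (\<omega>, u) \<partial>PU) = (\<lambda>\<omega>. indicator G \<omega> * psi (P t \<omega>))"
      by (simp add: f1_def psi_def fun_eq_iff)
    define f2 where "f2 = (\<lambda>v (x::'a \<times> ('w \<Rightarrow> real)). indicator G (fst x) * h (snd x v) * q2 v (fst x))"
    have q2m_Fc: "q2 v \<in> borel_measurable Fc" for v unfolding q2_def by measurable
    have f2m: "f2 v \<in> borel_measurable (Fc \<Otimes>\<^sub>M vecM)" for v
    proof -
      have "(\<lambda>x. snd x v) \<in> borel_measurable (Fc \<Otimes>\<^sub>M (vecM :: ('w \<Rightarrow> real) measure))" by measurable
      then show ?thesis unfolding f2_def using G q2m_Fc[of v] by measurable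
    qed
    have f2X: "(\<lambda>\<omega>. f2 v (\<omega>, U t \<omega>)) = (\<lambda>\<omega>. X2 v \<omega> * q2 v \<omega>)" for v
      by (simp add: f2_def X2_def fun_eq_iff)
    have f2i: "integrable M (\<lambda>\<omega>. f2 v (\<omega>, U t \<omega>))" for v unfolding f2X by (rule X2qi)
    note FR2 = freeze[OF M FcM U_meas[OF t] Uind UdistP f2m f2i]
    have inner2: "(\<lambda>\<omega>. \<integral>u. f2 v (\<omega>, u) \<partial>PU) = (\<lambda>\<omega>. indicator G \<omega> * E0 * q2 v \<omega>)" for v
      by (simp add: f2_def E0_def fun_eq_iff PU_component_integral(2)[OF h_int])
    have I1i: "integrable M (\<lambda>\<omega>. indicator G \<omega> * psi (P t \<omega>))" using FR1(1) unfolding inner1 .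
    have I2i: "integrable M (\<lambda>\<omega>. indicator G \<omega> * E0 * q2 v \<omega>)" for v using FR2(1)[of v] unfolding inner2 .
    have "(\<integral>\<omega>. indicator G \<omega> * Y \<omega> \<partial>M) = (\<integral>\<omega>. X1 \<omega> * indicator Bs \<omega> + (\<Sum>v\<in>UNIV. X2 v \<omega> * indicator (Cs v) \<omega>) \<partial>M)"
      by (rule Bochner_Integration.integral_cong[OF refl dec])
    also have "\<dots> = (\<integral>\<omega>. X1 \<omega> * indicator Bs \<omega> \<partial>M) + (\<integral>\<omega>. (\<Sum>v\<in>UNIV. X2 v \<omega> * indicator (Cs v) \<omega>) \<partial>M)"
      by (rule Bochner_Integration.integral_add[OF X1Bi Bochner_Integration.integrable_sum[OF X2Ci]])
    also have "(\<integral>\<omega>. (\<Sum>v\<in>UNIV. X2 v \<omega> * indicator (Cs v) \<omega>) \<partial>M) = (\<Sum>v\<in>UNIV. \<integral>\<omega>. X2 v \<omega> * indicator (Cs v) \<omega> \<partial>M)"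
      by (rule Bochner_Integration.integral_sum[OF X2Ci])
    also have "\<dots> = (\<Sum>v\<in>UNIV. \<integral>\<omega>. X2 v \<omega> * q2 v \<omega> \<partial>M)" using CE2 by simp
    also have "\<dots> = (\<Sum>v\<in>UNIV. \<integral>\<omega>. indicator G \<omega> * E0 * q2 v \<omega> \<partial>M)"
      using FR2(3) unfolding f2X inner2 by simp
    also have "(\<integral>\<omega>. X1 \<omega> * indicator Bs \<omega> \<partial>M) = (\<integral>\<omega>. X1 \<omega> \<partial>M) * eps" using CE1 by simp
    also have "(\<integral>\<omega>. X1 \<omega> \<partial>M) = (\<integral>\<omega>. indicator G \<omega> * psi (P t \<omega>) \<partial>M)"
      using FR1(3) unfolding f1X inner1 .
    finally have L: "(\<integral>\<omega>. indicator G \<omega> * Y \<omega> \<partial>M) = (\<integral>\<omega>. indicator G \<omega> * psi (P t \<omega>) \<partial>M) * eps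
        + (\<Sum>v\<in>UNIV. \<integral>\<omega>. indicator G \<omega> * E0 * q2 v \<omega> \<partial>M)" .
    have Ri: "integrable M (\<lambda>\<omega>. indicator G \<omega> * psi (P t \<omega>) * eps + (\<Sum>v\<in>UNIV. indicator G \<omega> * E0 * q2 v \<omega>))"
      using I1i I2i by auto
    have R: "(\<integral>\<omega>. indicator G \<omega> * psi (P t \<omega>) * eps + (\<Sum>v\<in>UNIV. indicator G \<omega> * E0 * q2 v \<omega>) \<partial>M)
        = (\<integral>\<omega>. indicator G \<omega> * psi (P t \<omega>) \<partial>M) * eps + (\<Sum>v\<in>UNIV. \<integral>\<omega>. indicator G \<omega> * E0 * q2 v \<omega> \<partial>M)"
    proof -
      have "(\<integral>\<omega>. indicator G \<omega> * psi (P t \<omega>) * eps + (\<Sum>v\<in>UNIV. indicator G \<omega> * E0 * q2 v \<omega>) \<partial>M)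
        = (\<integral>\<omega>. indicator G \<omega> * psi (P t \<omega>) * eps \<partial>M) + (\<integral>\<omega>. (\<Sum>v\<in>UNIV. indicator G \<omega> * E0 * q2 v \<omega>) \<partial>M)"
        by (rule Bochner_Integration.integral_add) (use I1i I2i in auto)
      also have "(\<integral>\<omega>. (\<Sum>v\<in>UNIV. indicator G \<omega> * E0 * q2 v \<omega>) \<partial>M) = (\<Sum>v\<in>UNIV. \<integral>\<omega>. indicator G \<omega> * E0 * q2 v \<omega> \<partial>M)"
        by (rule Bochner_Integration.integral_sum[OF I2i])
      finally show ?thesis by simp
    qed
    have pw: "indicator G \<omega> * psi (P t \<omega>) * eps + (\<Sum>v\<in>UNIV. indicator G \<omega> * E0 * q2 v \<omega>) = indicator G \<omega> * g \<omega>"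
      if \<omega>: "\<omega> \<in> space M" for \<omega>
    proof -
      have "(\<Sum>v\<in>UNIV. indicator G \<omega> * E0 * q2 v \<omega>) = (indicator G \<omega> * E0 * (1 - eps)) * (\<Sum>v\<in>UNIV. P t \<omega> v)"
        by (simp add: q2_def sum_distrib_left mult.assoc)
      also have "\<dots> = indicator G \<omega> * E0 * (1 - eps)" using P1[OF \<omega>] by simp
      finally show ?thesis using psi_eq[OF \<omega>] by (simp add: g_def algebra_simps)
    qed
    have eqI: "integrable M (\<lambda>\<omega>. indicator G \<omega> * psi (P t \<omega>) * eps + (\<Sum>v\<in>UNIV. indicator G \<omega> * E0 * q2 v \<omega>))
        = integrable M (\<lambda>\<omega>. indicator G \<omega> * g \<omega>)"
      by (rule Bochner_Integration.integrable_cong[OF refl]) (rule pw)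
    have eqL: "(\<integral>\<omega>. indicator G \<omega> * psi (P t \<omega>) * eps + (\<Sum>v\<in>UNIV. indicator G \<omega> * E0 * q2 v \<omega>) \<partial>M)
        = (\<integral>\<omega>. indicator G \<omega> * g \<omega> \<partial>M)"
      by (rule Bochner_Integration.integral_cong[OF refl]) (rule pw)
    have "integrable M (\<lambda>\<omega>. indicator G \<omega> * g \<omega>)" using Ri eqI by simp
    moreover have "(\<integral>\<omega>. indicator G \<omega> * Y \<omega> \<partial>M) = (\<integral>\<omega>. indicator G \<omega> * g \<omega> \<partial>M)"
      using L R eqL by simp
    ultimately show ?thesis by simp
  qed
  have spFc: "space M \<in> sets Fc" using sets.top[of Fc] FcM by simp
  have gi: "integrable M g"
  proof -
    have "integrable M (\<lambda>\<omega>. indicator (space M) \<omega> * g \<omega>) = integrable M g"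
      by (rule Bochner_Integration.integrable_cong[OF refl]) simp
    then show ?thesis using key[OF spFc] by simp
  qed
  have gm_gen: "g \<in> borel_measurable N" if N: "P t \<in> measurable N vecM" "space N = space M" for N
  proof -
    have "(\<lambda>\<omega>. eps * psi (P t \<omega>) + (1 - eps) * E0) \<in> borel_measurable N" using N(1) by measurable
    moreover have "(\<lambda>\<omega>. eps * psi (P t \<omega>) + (1 - eps) * E0) \<omega> = g \<omega>" if "\<omega> \<in> space N" for \<omega>
      using psi_eq[of \<omega>] that N(2) by (simp add: g_def)
    ultimately show ?thesis using measurable_cong[of N "(\<lambda>\<omega>. eps * psi (P t \<omega>) + (1 - eps) * E0)" g] by simp
  qed
  have seteq: "(\<integral>x\<in>A. Y x \<partial>M) = (\<integral>x\<in>A. g x \<partial>M)" if "A \<in> sets Fc" for A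
    unfolding set_lebesgue_integral_def using key[OF that] by simp
  interpret SFc: sigma_finite_subalgebra M Fc by (rule sfs_of_prob[OF M FcM])
  have c1: "AE \<omega> in M. real_cond_exp M Fc Y \<omega> = g \<omega>"
    by (rule SFc.real_cond_exp_charact[OF seteq Yi gi gm_gen[OF Pt_Fc FcM(2)]])
  have SM2: "sets S \<subseteq> sets M" "space S = space M" using SM FcM by auto
  interpret SS: sigma_finite_subalgebra M S by (rule sfs_of_prob[OF M SM2])
  have c2: "AE \<omega> in M. real_cond_exp M S Y \<omega> = g \<omega>"
    by (rule SS.real_cond_exp_charact[OF seteq Yi gi gm_gen[OF Pt_S SM(2)]]) (use SM in auto)
  have Yeq: "Y = (\<lambda>\<omega>. h (U t \<omega> (W t \<omega>)))" by (simp add: fun_eq_iff Y_def)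
  have geq: "g = (\<lambda>\<omega>. eps * (\<integral>y. h y \<partial>mu1 (P t \<omega>)) + (1 - eps) * (\<integral>y. h y \<partial>unif01))"
    by (simp add: fun_eq_iff g_def E0_def)
  show ?thesis using c1 c2 unfolding Yeq geq Fc_def S_def by simp
qed

end
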